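(* Fix $n\ge 2$, a dictator agent $t\in\{1,\dots,n\}$, and parameters $k\in[2,+\infty)$ and $a\in(0,1)$. Let $f$ be the mechanism that, on a profile $\mathbf{x}=(x_1,\dots,x_n)$ with $x_l=\min\mathbf{x}$, $x_r=\max\mathbf{x}$, $L=x_r-x_l$, outputs $l_1=x_t$ and $$l_2=\begin{cases} x_t+\max\left\{\frac{(1-a)k}{a}(x_t-x_l),\; x_r-x_t\right\} & \text{if } x_t\in[x_l,\,x_l+aL),\\[2pt] x_t-\max\left\{x_t-x_l,\; \frac{ak}{1-a}(x_r-x_t)\right\} & \text{if } x_t\in[x_l+aL,\,x_r].\end{cases}$$ Then $f$ is strategy-proof.
   Context: Two-facility game on a line: agent $i\in\{1,\dots,n\}$ has location $x_i\in\mathbb{R}$. A mechanism outputs two facility locations $\{l_1,l_2\}$; an agent at $y$ has cost $\min\{|l_1-y|,|l_2-y|\}$. A mechanism $f$ is strategy-proof if for every agent $i$, every profile $\mathbf{x}=\langle x_i,\mathbf{x}_{-i}\rangle$ and every $x_i'\in\mathbb{R}$, the cost of agent $i$ (at true location $x_i$) under $f(x_i,\mathbf{x}_{-i})$ is at most her cost under $f(x_i',\mathbf{x}_{-i})$. *)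

theory Defs
  imports Complex_Main
begin

text \<open>Profiles of n agents are functions nat => real; agent i (for i < n) sits at x i.
 Agents are indexed 0..n-1. A two-facility mechanism maps a profile to a pair of locations.\<close>

definition cost :: "real \<times> real \<Rightarrow> real \<Rightarrow> real" where
  "cost L y = min \<bar>fst L - y\<bar> \<bar>snd L - y\<bar>"

definition strategy_proof :: "nat \<Rightarrow> ((nat \<Rightarrow> real) \<Rightarrow> real \<times> real) \<Rightarrow> bool" where
  "strategy_proof n f \<longleftrightarrow>
     (\<forall>i<n. \<forall>x::nat \<Rightarrow> real. \<forall>x'::real.
        cost (f x) (x i) \<le> cost (f (x(i := x'))) (x i))"

definition xmin :: "nat \<Rightarrow> (nat \<Rightarrow> real) \<Rightarrow> real" where
  "xmin n x = Min (x ` {0..<n})"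

definition xmax :: "nat \<Rightarrow> (nat \<Rightarrow> real) \<Rightarrow> real" where
  "xmax n x = Max (x ` {0..<n})"

definition dict_mech :: "nat \<Rightarrow> nat \<Rightarrow> real \<Rightarrow> real \<Rightarrow> (nat \<Rightarrow> real) \<Rightarrow> real \<times> real" where
  "dict_mech n t k a x =
     (let xl = xmin n x; xr = xmax n x; L = xr - xl; xt = x t in
      (xt,
       if xl \<le> xt \<and> xt < xl + a * L
       then xt + max ((1 - a) * k / a * (xt - xl)) (xr - xt)
       else xt - max (xt - xl) (a * k / (1 - a) * (xr - xt))))"

end

theory Submission
  imports Defs
begin

lemma key:
  fixes A B k a c m0 M0 y z :: real
  assumes A0: "A \<ge> 0" and B0: "B \<ge> 0" and a0: "0 < a" and a1: "a < 1"
    and mc: "m0 \<le> c" and cM: "c \<le> M0"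
    and F1: "\<And>p s. 0 \<le> s \<Longrightarrow> a*s \<le> (1-a)*p \<Longrightarrow> 2*s \<le> A*p"
    and F2: "\<And>p q. 0 \<le> p \<Longrightarrow> (1-a)*p < a*q \<Longrightarrow> 2*p \<le> B*q"
    and g_def: "\<And>lo hi. g lo hi = (if lo \<le> c \<and> c < lo + a*(hi-lo) then c + max (A*(c-lo)) (hi-c)
                  else c - max (c-lo) (B*(hi-c)))"
  shows "min \<bar>c-y\<bar> \<bar>g (min m0 y) (max M0 y) - y\<bar> \<le> min \<bar>c-y\<bar> \<bar>g (min m0 z) (max M0 z) - y\<bar>"
proof -
  define l' where "l' = min m0 z"
  define h' where "h' = max M0 z"
  have l'm: "l' \<le> m0" and h'M: "M0 \<le> h'" unfolding l'_def h'_def by auto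
  have Amono: "A*(c-l') \<ge> A*(c-m0)" using l'm A0 by (simp add: mult_left_mono)
  have Bmono: "B*(h'-c) \<ge> B*(M0-c)" using h'M B0 by (simp add: mult_left_mono)
  have g'1: "g l' h' \<ge> c + A*(c-l')" if "l' \<le> c \<and> c < l' + a*(h'-l')"
    using that g_def[of l' h'] by auto
  have g'1b: "g l' h' \<ge> c + (h'-c)" if "l' \<le> c \<and> c < l' + a*(h'-l')"
    using that g_def[of l' h'] by auto
  have g'2: "g l' h' \<le> l'" if "\<not> (l' \<le> c \<and> c < l' + a*(h'-l'))"
    using that g_def[of l' h'] by auto
  have g'2b: "g l' h' \<le> c - B*(h'-c)" if "\<not> (l' \<le> c \<and> c < l' + a*(h'-l'))"
    using that g_def[of l' h'] by auto
  have g'2c: "g l' h' = c - max (c-l') (B*(h'-c))" if "\<not> (l' \<le> c \<and> c < l' + a*(h'-l'))"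
    using that g_def[of l' h'] by auto
  have g'1c: "g l' h' = c + max (A*(c-l')) (h'-c)" if "l' \<le> c \<and> c < l' + a*(h'-l')"
    using that g_def[of l' h'] by auto
  have l'c: "l' \<le> c" using l'm mc by simp
  consider "y > c" | "y = c" | "y < c" by linarith
  then show ?thesis
  proof cases
    case 1
    define h where "h = max M0 y"
    have lo: "min m0 y = m0" using 1 mc by simp
    have hy: "h \<ge> y" "h \<ge> M0" unfolding h_def by auto
    have "min \<bar>c-y\<bar> \<bar>g m0 h - y\<bar> \<le> min \<bar>c-y\<bar> \<bar>g l' h' - y\<bar>"
    proof (cases "m0 \<le> c \<and> c < m0 + a*(h-m0)")
      case T: True
      have g: "g m0 h = c + max (A*(c-m0)) (h-c)" using T g_def[of m0 h] by auto
      show ?thesis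
      proof (cases "l' \<le> c \<and> c < l' + a*(h'-l')")
        case True
        note G = g'1c[OF True]
        show ?thesis
        proof (cases "h' \<ge> h")
          case True
          then show ?thesis using G g Amono hy 1 by (auto simp: abs_if)
        next
          case False
          then have "h = y" using h'M hy unfolding h_def by auto
          then show ?thesis using G g Amono hy 1 by (auto simp: abs_if max_def)
        qed
      next
        case False
        then show ?thesis using g'2[OF False] l'c 1 by (auto simp: abs_if)
      qed
    next
      case F: False
      have "c - m0 \<ge> a*(h-m0)" using F mc by auto
      then have "(1-a)*(c-m0) \<ge> a*(h-c)" by (simp add: algebra_simps)
      moreover have "a*(h-c) \<ge> a*(y-c)" using hy a0 by (simp add: mult_left_mono)
      ultimately have "2*(y-c) \<le> A*(c-m0)" using F1[of "y-c" "c-m0"] 1 by simp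
      then show ?thesis
      proof (cases "l' \<le> c \<and> c < l' + a*(h'-l')")
        case True
        then show ?thesis using g'1[OF True] Amono 1 \<open>2*(y-c) \<le> A*(c-m0)\<close>
          by (auto simp: abs_if)
      next
        case False
        then show ?thesis using g'2[OF False] l'c 1 by (auto simp: abs_if)
      qed
    qed
    then show ?thesis using lo unfolding h_def l'_def h'_def by simp
  next
    case 2
    then show ?thesis by simp
  next
    case 3
    define l where "l = min m0 y"
    have hi: "max M0 y = M0" using 3 cM by simp
    have ly: "l \<le> y" "l \<le> m0" unfolding l_def by auto
    have lc: "l \<le> c" using ly 3 by simp
    have "min \<bar>c-y\<bar> \<bar>g l M0 - y\<bar> \<le> min \<bar>c-y\<bar> \<bar>g l' h' - y\<bar>"
    proof (cases "l \<le> c \<and> c < l + a*(M0-l)")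
      case T: True
      have "(1-a)*(c-l) < a*(M0-c)" using T by (simp add: algebra_simps)
      then have "2*(c-l) \<le> B*(M0-c)" using F2[of "c-l" "M0-c"] lc by simp
      show ?thesis
      proof (cases "l' \<le> c \<and> c < l' + a*(h'-l')")
        case True
        have "g l' h' \<ge> c" using g'1[OF True] l'c mult_nonneg_nonneg[OF A0, of "c-l'"] by linarith
        then show ?thesis using 3 by (auto simp: abs_if)
      next
        case False
        then show ?thesis using g'2b[OF False] Bmono 3 ly \<open>2*(c-l) \<le> B*(M0-c)\<close>
          by (auto simp: abs_if)
      qed
    next
      case F: False
      have g: "g l M0 = c - max (c-l) (B*(M0-c))" using F g_def[of l M0] by auto
      show ?thesis
      proof (cases "l' \<le> c \<and> c < l' + a*(h'-l')")
        case True
        have "g l' h' \<ge> c" using g'1[OF True] l'c mult_nonneg_nonneg[OF A0, of "c-l'"] by linarith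
        then show ?thesis using 3 by (auto simp: abs_if)
      next
        case False
        note G = g'2c[OF False]
        show ?thesis
        proof (cases "l' \<le> l")
          case True
          then show ?thesis using G g Bmono ly 3 by (auto simp: abs_if)
        next
          case False
          then have "l = y" using l'm ly unfolding l_def by auto
          then show ?thesis using G g Bmono ly 3 by (auto simp: abs_if max_def)
        qed
      qed
    qed
    then show ?thesis using hi unfolding l_def l'_def h'_def by simp
  qed
qed

lemma F1L:
  fixes k a p s :: real
  assumes "k \<ge> 2" "0 < a" "a < 1" "0 \<le> s" "a*s \<le> (1-a)*p"
  shows "2*s \<le> (1-a)*k/a*p"
proof -
  have "2*s \<le> k*s" using assms by (simp add: mult_right_mono)
  also have "k*s = k*(a*s)/a" using assms by simp
  also have "\<dots> \<le> k*((1-a)*p)/a" using assms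
    by (intro divide_right_mono mult_left_mono) auto
  also have "\<dots> = (1-a)*k/a*p" by simp
  finally show ?thesis .
qed

lemma F2L:
  fixes k a p q :: real
  assumes "k \<ge> 2" "0 < a" "a < 1" "0 \<le> p" "(1-a)*p < a*q"
  shows "2*p \<le> a*k/(1-a)*q"
proof -
  have "2*p \<le> k*p" using assms by (simp add: mult_right_mono)
  also have "k*p = k*((1-a)*p)/(1-a)" using assms by simp
  also have "\<dots> \<le> k*(a*q)/(1-a)" using assms
    by (intro divide_right_mono mult_left_mono) auto
  also have "\<dots> = a*k/(1-a)*q" by simp
  finally show ?thesis .
qed

lemma MinMax_upd:
  fixes x :: "nat \<Rightarrow> real"
  assumes "i < n" "t < n" "i \<noteq> t"
  shows "xmin n (x(i:=z)) = min (Min (x ` ({0..<n} - {i}))) z"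
    "xmax n (x(i:=z)) = max (Max (x ` ({0..<n} - {i}))) z"
    "Min (x ` ({0..<n} - {i})) \<le> x t" "x t \<le> Max (x ` ({0..<n} - {i}))"
proof -
  have S: "{0..<n} = insert i ({0..<n} - {i})" using assms by auto
  have O: "(x(i:=z)) ` ({0..<n} - {i}) = x ` ({0..<n} - {i})" by auto
  have I: "(x(i:=z)) ` {0..<n} = insert z (x ` ({0..<n} - {i}))"
    by (subst S) (simp only: image_insert O, simp)
  have ne: "x ` ({0..<n} - {i}) \<noteq> {}" using assms by auto
  have fin: "finite (x ` ({0..<n} - {i}))" by simp
  show "xmin n (x(i:=z)) = min (Min (x ` ({0..<n} - {i}))) z"
    unfolding xmin_def I using Min_insert[OF fin ne] by (simp add: min.commute)
  show "xmax n (x(i:=z)) = max (Max (x ` ({0..<n} - {i}))) z"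
    unfolding xmax_def I using Max_insert[OF fin ne] by (simp add: max.commute)
  have "x t \<in> x ` ({0..<n} - {i})" using assms by auto
  then show "Min (x ` ({0..<n} - {i})) \<le> x t" "x t \<le> Max (x ` ({0..<n} - {i}))"
    using fin by auto
qed

theorem theorem3:
  fixes n t :: nat and k a :: real
  assumes "n \<ge> 2" and "t < n" and "k \<ge> 2" and "0 < a" and "a < 1"
  shows "strategy_proof n (dict_mech n t k a)"
  unfolding strategy_proof_def
proof (intro allI impI)
  fix i x x'
  assume i: "i < n"
  show "cost (dict_mech n t k a x) (x i) \<le> cost (dict_mech n t k a (x(i := x'))) (x i)"
  proof (cases "i = t")
    case True
    then show ?thesis by (simp add: cost_def dict_mech_def Let_def)
  next
    case False
    define g where "g lo hi = (if lo \<le> x t \<and> x t < lo + a*(hi-lo)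
        then x t + max ((1-a)*k/a*(x t-lo)) (hi-x t)
        else x t - max (x t-lo) (a*k/(1-a)*(hi-x t)))" for lo hi
    have D: "dict_mech n t k a w = (w t, g (xmin n w) (xmax n w))" if "w t = x t" for w
      using that unfolding dict_mech_def g_def Let_def by simp
    have xe: "x = x(i := x i)" by simp
    have e1: "dict_mech n t k a x = (x t, g (min (Min (x ` ({0..<n} - {i}))) (x i))
                                          (max (Max (x ` ({0..<n} - {i}))) (x i)))"
      using D[of x] MinMax_upd(1,2)[OF i assms(2) False, of x "x i"] by simp
    have e2: "dict_mech n t k a (x(i:=x')) = (x t, g (min (Min (x ` ({0..<n} - {i}))) x')
                                          (max (Max (x ` ({0..<n} - {i}))) x'))"
      using D[of "x(i:=x')"] MinMax_upd(1,2)[OF i assms(2) False, of x x'] False by simp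
    have A0: "(1-a)*k/a \<ge> 0" and B0: "a*k/(1-a) \<ge> 0" using assms by auto
    show ?thesis unfolding e1 e2 cost_def fst_conv snd_conv
      by (rule key[OF A0 B0 assms(4,5) MinMax_upd(3,4)[OF i assms(2) False, of x]
              F1L[OF assms(3-5)] F2L[OF assms(3-5)] g_def])
  qed
qed

end
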